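(* In the concrete model, for every integer $m\ge1$ with $2m\le M$ and every $u\in\mathbb{C}$, $$T_{2m}(u)=T_{2m-2}(u)-\frac{u}{2}\{\mathbb{S}_{2m},T_{2m-2}(u)\},\qquad \mathbb{S}_{2m}:=h_{2m-1}+h_{2m}+\bar h_{2m+1},$$ where $\{X,Y\}=XY+YX$.
   Context: Concrete model. Fix an integer $M\ge1$ and complex numbers $b_1,\dots,b_M$. Let $h_1,\dots,h_M$ be elements of a unital associative complex algebra satisfying $h_m^2=b_m^2\mathbb{1}$, $h_mh_{m+1}=-h_{m+1}h_m$, $h_mh_{m+2}=-h_{m+2}h_m$, and $h_mh_l=h_lh_m$ for $|l-m|>2$ (e.g. $h_m=b_m\sigma^z_m\sigma^z_{m+1}\sigma^x_{m+2}$ on a spin chain). Set $h_j:=0$, $b_j:=0$ for $j\le 0$ or $j>M$. Let $\beta_3,\beta_5$ be arbitrary complex numbers and define $\beta_{2m+1}:=\beta_{2m-1}/(b_{2m-4}^2\beta_{2m-3}-b_{2m}^2\beta_{2m-1}+1)$ for $m\ge3$ (denominators assumed nonzero). For $2\le m\le\lfloor M/2\rfloor$ put $\bar h_{2m+1}:=\beta_{2m-1}h_{2m-2}h_{2m-3}h_{2m}$ and $\bar b_{2m+1}:=\beta_{2m-1}b_{2m-2}b_{2m-3}b_{2m}$ (so $\bar h_{2m+1}^2=\bar b_{2m+1}^2\mathbb{1}$); otherwise $\bar h_{2m+1}:=0$, $\bar b_{2m+1}:=0$. For $1\le j\le M$, the model of size $j$ (same couplings) has frustration graph $G_j$ with vertices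 $h_1,\dots,h_j$ and $\bar h_{2m+1}$ for $2\le m\le\lfloor j/2\rfloor$, and edges $h_i\sim h_l$ iff $|i-l|\in\{1,2\}$; $\bar h_{2m-1}\sim h_l$ iff $l\in\{2m-7,2m-5,2m-3,2m-1,2m-2,2m\}$; $\bar h_{2m-1}\sim\bar h_{2m'-1}$ iff $|m-m'|=1$ (adjacent vertices anticommute, non-adjacent distinct ones commute). Charges: $Q_j^{(k)}:=\sum_{S}\prod_{v\in S}v$, the sum over independent sets $S$ of $G_j$ of size $k$ ($Q_j^{(0)}=\mathbb{1}$). Hamiltonian $H_j:=Q_j^{(1)}=\sum_{l=1}^j h_l+\sum_{m=2}^{\lfloor j/2\rfloor}\beta_{2m-1}h_{2m-2}h_{2m-3}h_{2m}$. Transfer matrix $T_j(u):=\sum_{k\ge0}(-u)^kQ_j^{(k)}$ for $u\in\mathbb{C}$, with $T_j(u):=\mathbb{1}$ for $j\le 0$. *)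

theory Defs
  imports Complex_Main
begin

text \<open>The unital associative complex algebra is modelled as a type of class ring_1
  together with a unital ring homomorphism emb from the complex numbers into its centre
  (scalar multiplication c x is emb c * x).\<close>

definition is_complex_algebra :: "(complex \<Rightarrow> 'a::ring_1) \<Rightarrow> bool" where
  "is_complex_algebra emb \<longleftrightarrow>
     emb 1 = 1 \<and> (\<forall>x y. emb (x + y) = emb x + emb y) \<and> (\<forall>x y. emb (x * y) = emb x * emb y)
     \<and> (\<forall>c a. emb c * a = a * emb c)"

definition zext :: "nat \<Rightarrow> (nat \<Rightarrow> 'b::zero) \<Rightarrow> nat \<Rightarrow> 'b" where
  "zext M f j = (if 1 \<le> j \<and> j \<le> M then f j else 0)"

text \<open>betaseq M b beta3 beta5 k is beta_(2k+1) (beta_1 unused, set to 0).\<close>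
fun betaseq :: "nat \<Rightarrow> (nat \<Rightarrow> complex) \<Rightarrow> complex \<Rightarrow> complex \<Rightarrow> nat \<Rightarrow> complex" where
  "betaseq M b b3 b5 0 = 0"
| "betaseq M b b3 b5 (Suc 0) = b3"
| "betaseq M b b3 b5 (Suc (Suc 0)) = b5"
| "betaseq M b b3 b5 (Suc (Suc (Suc n))) =
     betaseq M b b3 b5 (n + 2) /
       ((zext M b (2*n + 2))\<^sup>2 * betaseq M b b3 b5 (n + 1)
        - (zext M b (2*n + 6))\<^sup>2 * betaseq M b b3 b5 (n + 2) + 1)"

text \<open>hbar M b h emb b3 b5 m is hbar_(2m+1).\<close>
definition hbar :: "nat \<Rightarrow> (nat \<Rightarrow> complex) \<Rightarrow> (nat \<Rightarrow> 'a::ring_1) \<Rightarrow> (complex \<Rightarrow> 'a)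
                      \<Rightarrow> complex \<Rightarrow> complex \<Rightarrow> nat \<Rightarrow> 'a" where
  "hbar M b h emb b3 b5 m =
     (if 2 \<le> m \<and> m \<le> M div 2
      then emb (betaseq M b b3 b5 (m - 1)) * zext M h (2*m - 2) * zext M h (2*m - 3) * zext M h (2*m)
      else 0)"

text \<open>Vertices of the frustration graph: H l is h_l, HB m is hbar_(2m+1).\<close>
datatype vtx = H nat | HB nat

definition verts :: "nat \<Rightarrow> vtx set" where
  "verts j = H ` {1..j} \<union> HB ` {2..j div 2}"

fun adj :: "vtx \<Rightarrow> vtx \<Rightarrow> bool" where
  "adj (H i) (H l) = (\<bar>int i - int l\<bar> \<in> {1, 2})"
| "adj (HB m) (H l) = (int l \<in> {2*int m - 5, 2*int m - 3, 2*int m - 1, 2*int m + 1, 2*int m, 2*int m + 2})"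
| "adj (H l) (HB m) = (int l \<in> {2*int m - 5, 2*int m - 3, 2*int m - 1, 2*int m + 1, 2*int m, 2*int m + 2})"
| "adj (HB m) (HB m') = (\<bar>int m - int m'\<bar> = 1)"

definition indep_set :: "nat \<Rightarrow> vtx set \<Rightarrow> bool" where
  "indep_set j S \<longleftrightarrow> S \<subseteq> verts j \<and> (\<forall>x\<in>S. \<forall>y\<in>S. \<not> adj x y)"

fun vkey :: "vtx \<Rightarrow> nat" where
  "vkey (H l) = 2 * l"
| "vkey (HB m) = 2 * m + 1"

fun vval :: "nat \<Rightarrow> (nat \<Rightarrow> complex) \<Rightarrow> (nat \<Rightarrow> 'a::ring_1) \<Rightarrow> (complex \<Rightarrow> 'a)
              \<Rightarrow> complex \<Rightarrow> complex \<Rightarrow> vtx \<Rightarrow> 'a" where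
  "vval M b h emb b3 b5 (H l) = zext M h l"
| "vval M b h emb b3 b5 (HB m) = hbar M b h emb b3 b5 m"

text \<open>Product over a set of (pairwise commuting) vertices, taken in a fixed order.\<close>
definition vprod :: "nat \<Rightarrow> (nat \<Rightarrow> complex) \<Rightarrow> (nat \<Rightarrow> 'a::ring_1) \<Rightarrow> (complex \<Rightarrow> 'a)
              \<Rightarrow> complex \<Rightarrow> complex \<Rightarrow> vtx set \<Rightarrow> 'a" where
  "vprod M b h emb b3 b5 S = prod_list (map (vval M b h emb b3 b5) (sorted_key_list_of_set vkey S))"

definition charge :: "nat \<Rightarrow> (nat \<Rightarrow> complex) \<Rightarrow> (nat \<Rightarrow> 'a::ring_1) \<Rightarrow> (complex \<Rightarrow> 'a)
              \<Rightarrow> complex \<Rightarrow> complex \<Rightarrow> nat \<Rightarrow> nat \<Rightarrow> 'a" where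
  "charge M b h emb b3 b5 j k = (\<Sum>S \<in> {S. indep_set j S \<and> card S = k}. vprod M b h emb b3 b5 S)"

definition transfer :: "nat \<Rightarrow> (nat \<Rightarrow> complex) \<Rightarrow> (nat \<Rightarrow> 'a::ring_1) \<Rightarrow> (complex \<Rightarrow> 'a)
              \<Rightarrow> complex \<Rightarrow> complex \<Rightarrow> nat \<Rightarrow> complex \<Rightarrow> 'a" where
  "transfer M b h emb b3 b5 j u =
     (if j = 0 then 1
      else (\<Sum>k \<le> card (verts j). emb ((- u) ^ k) * charge M b h emb b3 b5 j k))"

definition anticomm :: "'a::ring \<Rightarrow> 'a \<Rightarrow> 'a" where
  "anticomm X Y = X * Y + Y * X"

end

theory Submission
  imports Defs
begin



context linorder begin
lemma skl_insert: "inj f \<Longrightarrow> finite A \<Longrightarrow> x \<notin> A \<Longrightarrow> sorted_key_list_of_set f (insert x A) = insort_key f x (sorted_key_list_of_set f A)"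
proof -
  assume "inj f" "finite A" "x \<notin> A"
  then interpret folding_insort_key "(\<le>)" "(<)" UNIV f by unfold_locales (simp add: inj_on_def inj_def)
  show ?thesis by (rule sorted_key_list_of_set_insert) (use \<open>finite A\<close> \<open>x \<notin> A\<close> in auto)
qed
lemma skl_set: "inj f \<Longrightarrow> finite A \<Longrightarrow> set (sorted_key_list_of_set f A) = A"
proof -
  assume "inj f" "finite A"
  then interpret folding_insort_key "(\<le>)" "(<)" UNIV f by unfold_locales (simp add: inj_on_def inj_def)
  show ?thesis using \<open>finite A\<close> by simp
qed
lemma skl_distinct: "inj f \<Longrightarrow> distinct (sorted_key_list_of_set f A)"
proof -
  assume "inj f"
  then interpret folding_insort_key "(\<le>)" "(<)" UNIV f by unfold_locales (simp add: inj_on_def inj_def)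
  show ?thesis using distinct_sorted_key_list_of_set[of A] by (simp add: distinct_map)
qed
lemma skl_empty: "inj f \<Longrightarrow> sorted_key_list_of_set f {} = []"
proof -
  assume "inj f"
  then interpret folding_insort_key "(\<le>)" "(<)" UNIV f by unfold_locales (simp add: inj_on_def inj_def)
  show ?thesis by (rule sorted_key_list_of_set_empty)
qed
end

lemma vkey_inj: "inj vkey"
proof (rule injI)
  fix x y assume "vkey x = vkey y" then show "x = y"
    by (cases x; cases y) (simp_all, presburger+)
qed

definition rel :: "'a::ring_1 \<Rightarrow> 'a \<Rightarrow> int \<Rightarrow> bool" where
  "rel x y e \<longleftrightarrow> x * y = of_int e * (y * x)"

lemma rel_refl: "rel x x 1" by (simp add: rel_def)
lemma rel_one: "rel x 1 1" by (simp add: rel_def)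

lemma rel_mult_right: "rel x y s \<Longrightarrow> rel x z t \<Longrightarrow> rel x (y * z) (s * t)"
proof -
  assume a: "rel x y s" "rel x z t"
  have "x * (y * z) = (x * y) * z" by (simp add: mult.assoc)
  also have "\<dots> = of_int s * y * (x * z)" using a(1) by (simp add: rel_def mult.assoc)
  also have "\<dots> = of_int s * y * (of_int t * (z * x))" using a(2) by (simp add: rel_def)
  also have "\<dots> = of_int (s * t) * (y * z * x)"
  proof -
    have c: "y * of_int t = of_int t * y" by (rule mult_of_int_commute[symmetric])
    show ?thesis by (metis c mult.assoc of_int_mult)
  qed
  finally show ?thesis by (simp add: rel_def)
qed

lemma rel_mult_left: "rel x z s \<Longrightarrow> rel y z t \<Longrightarrow> rel (x * y) z (s * t)"
proof -
  assume a: "rel x z s" "rel y z t"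
  have "(x * y) * z = x * (y * z)" by (simp add: mult.assoc)
  also have "\<dots> = x * (of_int t * (z * y))" using a(2) by (simp add: rel_def)
  also have "\<dots> = of_int t * ((x * z) * y)"
  proof -
    have c: "x * of_int t = of_int t * x" by (rule mult_of_int_commute[symmetric])
    show ?thesis by (metis c mult.assoc)
  qed
  also have "\<dots> = of_int t * (of_int s * (z * x) * y)" using a(1) by (simp add: rel_def)
  also have "\<dots> = of_int (s * t) * (z * (x * y))"
    by (metis mult.assoc of_int_mult mult.commute)
  finally show ?thesis by (simp add: rel_def)
qed

lemma rel_sym: "rel x y s \<Longrightarrow> s * s = 1 \<Longrightarrow> rel y x s"
proof -
  assume a: "rel x y s" "s * s = 1"
  have "y * x = of_int (s * s) * (y * x)" using a(2) by simp
  also have "\<dots> = of_int s * (of_int s * (y * x))" by (simp add: mult.assoc)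
  also have "\<dots> = of_int s * (x * y)" using a(1) by (simp add: rel_def)
  finally show ?thesis by (simp add: rel_def)
qed

lemma rel_central_right: "(\<And>a. c * a = a * c) \<Longrightarrow> rel x y s \<Longrightarrow> rel x (c * y) s"
proof -
  assume c: "\<And>a. c * a = a * c" and a: "rel x y s"
  have "x * (c * y) = c * (x * y)" by (metis c mult.assoc)
  also have "\<dots> = c * (of_int s * (y * x))" using a by (simp add: rel_def)
  also have "\<dots> = of_int s * (c * y * x)" by (metis c mult.assoc)
  finally show ?thesis by (simp add: rel_def)
qed

lemma rel_list: "(\<And>x. x \<in> set xs \<Longrightarrow> rel v (f x) (s x)) \<Longrightarrow> rel v (prod_list (map f xs)) (prod_list (map s xs))"
  by (induction xs) (auto intro: rel_mult_right rel_one)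

lemma prod_insort: "(\<And>x. x \<in> set xs \<Longrightarrow> f v * f x = f x * f v) \<Longrightarrow>
   prod_list (map f (insort_key k v xs)) = (f v :: 'a::monoid_mult) * prod_list (map f xs)"
proof (induction xs)
  case (Cons y ys)
  have "f y * (f v * prod_list (map f ys)) = f v * (f y * prod_list (map f ys))"
    using Cons.prems[of y] by (metis mult.assoc list.set_intros(1))
  moreover have "prod_list (map f (insort_key k v ys)) = f v * prod_list (map f ys)"
    using Cons.IH Cons.prems by simp
  ultimately show ?case by (simp add: mult.assoc)
qed simp




lemma verts_mono: "j \<le> j' \<Longrightarrow> verts j \<subseteq> verts j'"
  unfolding verts_def by (auto intro!: imageI div_le_mono)

lemma finite_verts: "finite (verts j)" unfolding verts_def by auto

definition newv :: "nat \<Rightarrow> vtx set" where "newv m = verts (2*m) - verts (2*m-2)"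

lemma newv_eq: "1 \<le> m \<Longrightarrow> newv m = {H (2*m-1), H (2*m)} \<union> (if 2 \<le> m then {HB m} else {})"
  unfolding newv_def verts_def by (auto simp: image_iff) 

lemma newv_adj: "1 \<le> m \<Longrightarrow> v \<in> newv m \<Longrightarrow> v' \<in> newv m \<Longrightarrow> v \<noteq> v' \<Longrightarrow> adj v v'"
  by (auto simp: newv_eq split: if_splits)

lemma verts_iff: "w \<in> verts j \<longleftrightarrow> (\<exists>l. w = H l \<and> 1 \<le> l \<and> l \<le> j) \<or> (\<exists>k. w = HB k \<and> 2 \<le> k \<and> k \<le> j div 2)"
  unfolding verts_def by auto

lemma nb1: "w \<in> verts (2*m-2) \<Longrightarrow> adj (H (2*m-1)) w \<Longrightarrow> 1 \<le> m \<Longrightarrow> w = H (2*m-3) \<or> w = H (2*m-2) \<or> w = HB (m-1)"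
  unfolding verts_iff by (elim disjE exE conjE; simp; arith)
lemma nb2: "w \<in> verts (2*m-2) \<Longrightarrow> adj (H (2*m)) w \<Longrightarrow> 1 \<le> m \<Longrightarrow> w = H (2*m-2) \<or> w = HB (m-1)"
  unfolding verts_iff by (elim disjE exE conjE; simp; arith)
lemma nb3: "w \<in> verts (2*m-2) \<Longrightarrow> adj (HB m) w \<Longrightarrow> 2 \<le> m \<Longrightarrow> w = H (2*m-5) \<or> w = H (2*m-3) \<or> w = HB (m-1)"
  unfolding verts_iff by (elim disjE exE conjE; simp; arith)

lemma tri1: "x \<in> {H (2*m-3), H (2*m-2), HB (m-1)} \<Longrightarrow> y \<in> {H (2*m-3), H (2*m-2), HB (m-1)} \<Longrightarrow>
   x \<in> verts (2*m-2) \<Longrightarrow> y \<in> verts (2*m-2) \<Longrightarrow> x \<noteq> y \<Longrightarrow> adj x y"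
  by (auto simp: verts_iff of_nat_diff)
lemma tri2: "x \<in> {H (2*m-2), HB (m-1)} \<Longrightarrow> y \<in> {H (2*m-2), HB (m-1)} \<Longrightarrow>
   x \<in> verts (2*m-2) \<Longrightarrow> y \<in> verts (2*m-2) \<Longrightarrow> x \<noteq> y \<Longrightarrow> adj x y"
  by (auto simp: verts_iff of_nat_diff)
lemma tri3: "x \<in> {H (2*m-5), H (2*m-3), HB (m-1)} \<Longrightarrow> y \<in> {H (2*m-5), H (2*m-3), HB (m-1)} \<Longrightarrow>
   x \<in> verts (2*m-2) \<Longrightarrow> y \<in> verts (2*m-2) \<Longrightarrow> x \<noteq> y \<Longrightarrow> adj x y"
  by (auto simp: verts_iff of_nat_diff)

lemma old_adj: assumes "1 \<le> m" "v \<in> newv m" "w1 \<in> verts (2*m-2)" "w2 \<in> verts (2*m-2)"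
   "adj v w1" "adj v w2" "w1 \<noteq> w2" shows "adj w1 w2"
proof -
  have v: "v = H (2*m-1) \<or> v = H (2*m) \<or> (v = HB m \<and> 2 \<le> m)" using assms(1,2) by (auto simp: newv_eq split: if_splits)
  from v show ?thesis
  proof (elim disjE conjE)
    assume "v = H (2*m-1)"
    then have "w1 \<in> {H (2*m-3), H (2*m-2), HB (m-1)}" "w2 \<in> {H (2*m-3), H (2*m-2), HB (m-1)}"
      using nb1[of w1 m] nb1[of w2 m] assms by auto
    then show ?thesis using tri1 assms(3,4,7) by blast
  next
    assume "v = H (2*m)"
    then have "w1 \<in> {H (2*m-2), HB (m-1)}" "w2 \<in> {H (2*m-2), HB (m-1)}"
      using nb2[of w1 m] nb2[of w2 m] assms by auto
    then show ?thesis using tri2 assms(3,4,7) by blast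
  next
    assume "v = HB m" "2 \<le> m"
    then have "w1 \<in> {H (2*m-5), H (2*m-3), HB (m-1)}" "w2 \<in> {H (2*m-5), H (2*m-3), HB (m-1)}"
      using nb3[of w1 m] nb3[of w2 m] assms by auto
    then show ?thesis using tri3 assms(3,4,7) by blast
  qed
qed

definition sg :: "vtx \<Rightarrow> vtx \<Rightarrow> int" where "sg x y = (if adj x y then -1 else 1)"

lemma sign_hhb: "2 \<le> k \<Longrightarrow> sg (H l) (H (2*k-2)) * sg (H l) (H (2*k-3)) * sg (H l) (H (2*k)) = sg (H l) (HB k)"
  unfolding sg_def by (simp add: of_nat_diff) (auto; presburger)

lemma sign_hbhb: "2 \<le> k \<Longrightarrow> 2 \<le> k' \<Longrightarrow> sg (HB k) (H (2*k'-2)) * sg (HB k) (H (2*k'-3)) * sg (HB k) (H (2*k')) = sg (HB k) (HB k')"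
  unfolding sg_def by (simp add: of_nat_diff) (auto; presburger)
locale model =
  fixes M :: nat and b :: "nat \<Rightarrow> complex" and h :: "nat \<Rightarrow> 'a::ring_1"
    and emb :: "complex \<Rightarrow> 'a" and beta3 beta5 :: complex
  assumes alg: "is_complex_algebra emb"
    and ac1: "\<And>i. 1 \<le> i \<Longrightarrow> i + 1 \<le> M \<Longrightarrow> h i * h (i + 1) = - (h (i + 1) * h i)"
    and ac2: "\<And>i. 1 \<le> i \<Longrightarrow> i + 2 \<le> M \<Longrightarrow> h i * h (i + 2) = - (h (i + 2) * h i)"
    and cm: "\<And>i l. 1 \<le> i \<Longrightarrow> i \<le> M \<Longrightarrow> 1 \<le> l \<Longrightarrow> l \<le> M \<Longrightarrow> i + 2 < l \<Longrightarrow> h i * h l = h l * h i"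
begin

abbreviation "vv \<equiv> vval M b h emb beta3 beta5"
abbreviation "vp \<equiv> vprod M b h emb beta3 beta5"
abbreviation "hb \<equiv> hbar M b h emb beta3 beta5"

lemma emb_1: "emb 1 = 1" using alg unfolding is_complex_algebra_def by blast
lemma emb_add: "emb (x + y) = emb x + emb y" using alg unfolding is_complex_algebra_def by blast
lemma emb_mult: "emb (x * y) = emb x * emb y" using alg unfolding is_complex_algebra_def by blast
lemma emb_central: "emb c * a = a * emb c" using alg unfolding is_complex_algebra_def by blast
lemma emb_0: "emb 0 = 0" using emb_add[of 0 0] by simp
lemma emb_neg: "emb (- x) = - emb x"
  using emb_add[of x "-x"] emb_0 by (simp add: eq_neg_iff_add_eq_0 add.commute)
lemma emb_2: "emb 2 = 2" using emb_add[of 1 1] emb_1 by (simp add: one_add_one)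

lemma hrel_lt: "1 \<le> l \<Longrightarrow> l < i \<Longrightarrow> i \<le> M \<Longrightarrow> rel (h l) (h i) (if adj (H l) (H i) then -1 else 1)"
proof -
  assume a: "1 \<le> l" "l < i" "i \<le> M"
  consider "i = l + 1" | "i = l + 2" | "l + 2 < i" using a by linarith
  then show ?thesis
  proof cases
    case 1 then show ?thesis using ac1[of l] a by (simp add: rel_def)
  next
    case 2 then show ?thesis using ac2[of l] a by (simp add: rel_def)
  next
    case 3
    then have "\<not> adj (H l) (H i)" by auto
    then show ?thesis using cm[of l i] a 3 by (simp add: rel_def)
  qed
qed

lemma adj_sym: "adj x y = adj y x"
  by (cases x; cases y) auto

lemma hrel: "1 \<le> l \<Longrightarrow> l \<le> M \<Longrightarrow> 1 \<le> i \<Longrightarrow> i \<le> M \<Longrightarrow> rel (h l) (h i) (if adj (H l) (H i) then -1 else 1)"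
proof -
  assume a: "1 \<le> l" "l \<le> M" "1 \<le> i" "i \<le> M"
  consider "l = i" | "l < i" | "i < l" by linarith
  then show ?thesis
  proof cases
    case 1 then show ?thesis by (simp add: rel_refl)
  next
    case 2 then show ?thesis using hrel_lt a by simp
  next
    case 3
    have r: "rel (h i) (h l) (if adj (H i) (H l) then -1 else 1)" using hrel_lt[of i l] a 3 by simp
    have "rel (h l) (h i) (if adj (H i) (H l) then -1 else 1)" by (rule rel_sym[OF r]) simp
    then show ?thesis by (subst adj_sym) 
  qed
qed


lemma hb_eq: "2 \<le> k \<Longrightarrow> k \<le> M div 2 \<Longrightarrow>
  hb k = emb (betaseq M b beta3 beta5 (k-1)) * h (2*k-2) * h (2*k-3) * h (2*k)"
proof -
  assume a: "2 \<le> k" "k \<le> M div 2"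
  then have f: "2 * k \<le> M" "1 \<le> 2*k-3" "2*k-3 \<le> M" "1 \<le> 2*k-2" "2*k-2 \<le> M" "1 \<le> 2*k" by linarith+
  then show ?thesis using a by (simp add: hbar_def zext_def)
qed

lemma hhb: assumes "1 \<le> l" "l \<le> M" "2 \<le> k" "k \<le> M div 2"
  shows "rel (h l) (hb k) (sg (H l) (HB k))"
proof -
  have r1: "rel (h l) (emb (betaseq M b beta3 beta5 (k-1)) * h (2*k-2)) (sg (H l) (H (2*k-2)))"
    by (rule rel_central_right[OF emb_central]) (use hrel[of l "2*k-2"] assms in \<open>simp add: sg_def\<close>)
  have r2: "rel (h l) (h (2*k-3)) (sg (H l) (H (2*k-3)))"
    using hrel[of l "2*k-3"] assms by (simp add: sg_def)
  have r3: "rel (h l) (h (2*k)) (sg (H l) (H (2*k)))"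
    using hrel[of l "2*k"] assms by (simp add: sg_def)
  have "rel (h l) (hb k) (sg (H l) (H (2*k-2)) * sg (H l) (H (2*k-3)) * sg (H l) (H (2*k)))"
    unfolding hb_eq[OF assms(3,4)] by (intro rel_mult_right r1 r2 r3)
  then show ?thesis using sign_hhb[OF assms(3), of l] by simp
qed

lemma sg_sq: "sg x y * sg x y = 1" by (simp add: sg_def)
lemma sg_sym: "sg x y = sg y x" by (simp add: sg_def adj_sym[of x y])

lemma hbh: assumes "1 \<le> l" "l \<le> M" "2 \<le> k" "k \<le> M div 2"
  shows "rel (hb k) (h l) (sg (HB k) (H l))"
  using rel_sym[OF hhb[OF assms] sg_sq] sg_sym[of "H l" "HB k"] by simp

lemma hbhb: assumes "2 \<le> k" "k \<le> M div 2" "2 \<le> k'" "k' \<le> M div 2"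
  shows "rel (hb k) (hb k') (sg (HB k) (HB k'))"
proof -
  have r1: "rel (hb k) (emb (betaseq M b beta3 beta5 (k'-1)) * h (2*k'-2)) (sg (HB k) (H (2*k'-2)))"
    by (rule rel_central_right[OF emb_central]) (use hbh[of "2*k'-2" k] assms in simp)
  have r2: "rel (hb k) (h (2*k'-3)) (sg (HB k) (H (2*k'-3)))"
    using hbh[of "2*k'-3" k] assms by simp
  have r3: "rel (hb k) (h (2*k')) (sg (HB k) (H (2*k')))"
    using hbh[of "2*k'" k] assms by simp
  have "rel (hb k) (hb k') (sg (HB k) (H (2*k'-2)) * sg (HB k) (H (2*k'-3)) * sg (HB k) (H (2*k')))"
    unfolding hb_eq[OF assms(3,4)] by (intro rel_mult_right r1 r2 r3)
  then show ?thesis using sign_hbhb[OF assms(1,3)] by simp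
qed

lemma vrel: assumes "x \<in> verts M" "y \<in> verts M" shows "rel (vv x) (vv y) (sg x y)"
proof -
  have z: "1 \<le> l \<Longrightarrow> l \<le> M \<Longrightarrow> zext M h l = h l" for l by (simp add: zext_def)
  show ?thesis using assms unfolding verts_iff
  proof (elim disjE exE conjE)
    fix l l' assume "x = H l" "1 \<le> l" "l \<le> M" "y = H l'" "1 \<le> l'" "l' \<le> M"
    then show ?thesis using hrel[of l l'] z by (simp add: sg_def)
  next
    fix l k assume "x = H l" "1 \<le> l" "l \<le> M" "y = HB k" "2 \<le> k" "k \<le> M div 2"
    then show ?thesis using hhb[of l k] z by simp
  next
    fix l k assume "y = H l" "1 \<le> l" "l \<le> M" "x = HB k" "2 \<le> k" "k \<le> M div 2"
    then show ?thesis using hbh[of l k] z by simp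
  next
    fix k k' assume "x = HB k" "2 \<le> k" "k \<le> M div 2" "y = HB k'" "2 \<le> k'" "k' \<le> M div 2"
    then show ?thesis using hbhb[of k k'] by simp
  qed
qed

end


definition Ind :: "nat \<Rightarrow> vtx set set" where "Ind j = {S. indep_set j S}"

lemma Ind_sub: "Ind j \<subseteq> Pow (verts j)" by (auto simp: Ind_def indep_set_def)
lemma finite_Ind: "finite (Ind j)" using Ind_sub finite_verts by (metis finite_Pow_iff finite_subset)
lemma Ind_finite: "S \<in> Ind j \<Longrightarrow> finite S" using Ind_sub finite_verts by (meson PowD finite_subset subsetD)
lemma adj_irrefl: "\<not> adj x x" by (cases x) auto

lemma anticomm_sum_left: "anticomm (sum f N) Y = (\<Sum>v\<in>N. anticomm (f v) Y)"
  by (simp add: anticomm_def sum_distrib_left sum_distrib_right sum.distrib)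
lemma anticomm_sum_right: "anticomm X (sum f N) = (\<Sum>v\<in>N. anticomm X (f v))"
  by (simp add: anticomm_def sum_distrib_left sum_distrib_right sum.distrib)

context model begin

lemma vp_empty: "vp {} = 1"
  by (simp add: vprod_def skl_empty[OF vkey_inj])

lemma T_expand: "transfer M b h emb beta3 beta5 j u = (\<Sum>S\<in>Ind j. emb ((-u)^card S) * vp S)"
proof -
  have gen: "(\<Sum>k\<le>card (verts j). emb ((- u) ^ k) * charge M b h emb beta3 beta5 j k)
      = (\<Sum>S\<in>Ind j. emb ((-u)^card S) * vp S)"
  proof -
    have "(\<Sum>k\<le>card (verts j). emb ((- u) ^ k) * charge M b h emb beta3 beta5 j k)
       = (\<Sum>k\<le>card (verts j). \<Sum>S\<in>{S \<in> Ind j. card S = k}. emb ((-u)^card S) * vp S)"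
      unfolding charge_def sum_distrib_left
      by (intro sum.cong refl) (auto simp: Ind_def)
    also have "\<dots> = (\<Sum>S\<in>Ind j. emb ((-u)^card S) * vp S)"
    proof (rule sum.group[OF finite_Ind])
      show "finite {..card (verts j)}" by simp
      show "card ` Ind j \<subseteq> {..card (verts j)}"
        using Ind_sub[of j] finite_verts[of j] by (auto intro!: card_mono)
    qed
    finally show ?thesis .
  qed
  show ?thesis
  proof (cases "j = 0")
    case True
    then have "Ind j = {{}}" by (auto simp: Ind_def indep_set_def verts_def)
    then show ?thesis using True by (simp add: transfer_def vp_empty emb_1)
  next
    case False
    then show ?thesis using gen by (simp add: transfer_def)
  qed
qed

lemma vp_insert: assumes "finite I" "v \<notin> I" "\<And>w. w \<in> I \<Longrightarrow> vv v * vv w = vv w * vv v"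
  shows "vp (insert v I) = vv v * vp I"
  unfolding vprod_def skl_insert[OF vkey_inj assms(1,2)]
  by (rule prod_insort) (use assms skl_set[OF vkey_inj assms(1)] in auto)

lemma vp_rel: assumes "finite I" "\<And>w. w \<in> I \<Longrightarrow> rel x (vv w) (s w)"
  shows "rel x (vp I) (prod s I)"
proof -
  have "rel x (vp I) (prod_list (map s (sorted_key_list_of_set vkey I)))"
    unfolding vprod_def by (rule rel_list) (use assms skl_set[OF vkey_inj assms(1)] in auto)
  also have "prod_list (map s (sorted_key_list_of_set vkey I)) = prod s I"
    using prod.distinct_set_conv_list[OF skl_distinct[OF vkey_inj], of s I] skl_set[OF vkey_inj assms(1)] by simp
  finally show ?thesis .
qed


lemma verts_split: "1 \<le> m \<Longrightarrow> verts (2*m) = verts (2*m-2) \<union> newv m"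
  using verts_mono[of "2*m-2" "2*m"] by (auto simp: newv_def)

lemma newv_notin: "v \<in> newv m \<Longrightarrow> v \<notin> verts (2*m-2)" by (simp add: newv_def)

lemma Ind_decomp: assumes "1 \<le> m"
  shows "Ind (2*m) = Ind (2*m-2) \<union> (\<Union>v\<in>newv m. insert v ` {I \<in> Ind (2*m-2). \<forall>w\<in>I. \<not> adj v w})"
proof
  show "Ind (2*m) \<subseteq> Ind (2*m-2) \<union> (\<Union>v\<in>newv m. insert v ` {I \<in> Ind (2*m-2). \<forall>w\<in>I. \<not> adj v w})"
  proof
    fix S assume S: "S \<in> Ind (2*m)"
    then have Ssub: "S \<subseteq> verts (2*m-2) \<union> newv m" and Sind: "\<forall>x\<in>S. \<forall>y\<in>S. \<not> adj x y"
      using verts_split[OF assms] by (auto simp: Ind_def indep_set_def)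
    show "S \<in> Ind (2*m-2) \<union> (\<Union>v\<in>newv m. insert v ` {I \<in> Ind (2*m-2). \<forall>w\<in>I. \<not> adj v w})"
    proof (cases "S \<inter> newv m = {}")
      case True
      then have "S \<in> Ind (2*m-2)" using Ssub Sind by (auto simp: Ind_def indep_set_def)
      then show ?thesis by simp
    next
      case False
      then obtain v where v: "v \<in> S" "v \<in> newv m" by auto
      have "S - {v} \<subseteq> verts (2*m-2)"
      proof
        fix x assume x: "x \<in> S - {v}"
        show "x \<in> verts (2*m-2)"
        proof (rule ccontr)
          assume "x \<notin> verts (2*m-2)"
          then have "x \<in> newv m" using x Ssub by auto
          then have "adj v x" using newv_adj[OF assms v(2)] x by auto
          then show False using Sind v x by auto
        qed
      qed
      then have "S - {v} \<in> {I \<in> Ind (2*m-2). \<forall>w\<in>I. \<not> adj v w}"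
        using Sind v by (auto simp: Ind_def indep_set_def)
      moreover have "S = insert v (S - {v})" using v by auto
      ultimately show ?thesis using v(2) by blast
    qed
  qed
next
  show "Ind (2*m-2) \<union> (\<Union>v\<in>newv m. insert v ` {I \<in> Ind (2*m-2). \<forall>w\<in>I. \<not> adj v w}) \<subseteq> Ind (2*m)"
  proof
    fix S assume "S \<in> Ind (2*m-2) \<union> (\<Union>v\<in>newv m. insert v ` {I \<in> Ind (2*m-2). \<forall>w\<in>I. \<not> adj v w})"
    then show "S \<in> Ind (2*m)"
    proof
      assume "S \<in> Ind (2*m-2)"
      then show ?thesis using verts_split[OF assms] by (auto simp: Ind_def indep_set_def)
    next
      assume "S \<in> (\<Union>v\<in>newv m. insert v ` {I \<in> Ind (2*m-2). \<forall>w\<in>I. \<not> adj v w})"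
      then obtain v I where v: "v \<in> newv m" "S = insert v I" "I \<in> Ind (2*m-2)" "\<forall>w\<in>I. \<not> adj v w" by auto
      have "\<forall>w\<in>I. \<not> adj w v" using v(4) adj_sym by blast
      then show ?thesis using v verts_split[OF assms] adj_irrefl
        by (auto simp: Ind_def indep_set_def)
    qed
  qed
qed

lemma sum_decomp: assumes "1 \<le> m"
  shows "(\<Sum>S\<in>Ind (2*m). f S) = (\<Sum>S\<in>Ind (2*m-2). f S)
     + (\<Sum>v\<in>newv m. \<Sum>I\<in>{I \<in> Ind (2*m-2). \<forall>w\<in>I. \<not> adj v w}. f (insert v I))"
proof -
  let ?C = "\<lambda>v. {I \<in> Ind (2*m-2). \<forall>w\<in>I. \<not> adj v w}"
  have fN: "finite (newv m)" by (simp add: newv_def finite_verts)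
  have fC: "finite (?C v)" for v using finite_Ind by simp
  have d1: "Ind (2*m-2) \<inter> (\<Union>v\<in>newv m. insert v ` ?C v) = {}"
    using Ind_sub newv_notin by fastforce
  have d2: "\<forall>v\<in>newv m. \<forall>v'\<in>newv m. v \<noteq> v' \<longrightarrow> insert v ` ?C v \<inter> insert v' ` ?C v' = {}"
  proof (intro ballI impI)
    fix v v' assume vv: "v \<in> newv m" "v' \<in> newv m" "v \<noteq> v'"
    show "insert v ` ?C v \<inter> insert v' ` ?C v' = {}"
    proof (rule ccontr)
      assume "insert v ` ?C v \<inter> insert v' ` ?C v' \<noteq> {}"
      then obtain I I' where II: "I \<in> ?C v" "I' \<in> ?C v'" "insert v I = insert v' I'" by auto
      have "v' \<in> insert v I" using II(3) by auto
      then have "v' \<in> I" using vv(3) by auto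
      moreover have "I \<subseteq> verts (2*m-2)" using II(1) Ind_sub by auto
      ultimately have "v' \<in> verts (2*m-2)" by auto
      then show False using newv_notin[OF vv(2)] by auto
    qed
  qed
  have inj: "inj_on (insert v) (?C v)" if "v \<in> newv m" for v
  proof (rule inj_onI)
    fix I J assume "I \<in> ?C v" "J \<in> ?C v" "insert v I = insert v J"
    moreover have "v \<notin> I" "v \<notin> J" using \<open>I \<in> ?C v\<close> \<open>J \<in> ?C v\<close> Ind_sub newv_notin[OF that] by auto
    ultimately show "I = J" by (metis insert_ident)
  qed
  have "(\<Sum>S\<in>Ind (2*m). f S) = (\<Sum>S\<in>Ind (2*m-2). f S) + (\<Sum>S\<in>(\<Union>v\<in>newv m. insert v ` ?C v). f S)"
    unfolding Ind_decomp[OF assms]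
    by (rule sum.union_disjoint) (use finite_Ind fN fC d1 in auto)
  also have "(\<Sum>S\<in>(\<Union>v\<in>newv m. insert v ` ?C v). f S) = (\<Sum>v\<in>newv m. \<Sum>S\<in>insert v ` ?C v. f S)"
    by (rule sum.UNION_disjoint) (use fN fC d2 in auto)
  also have "\<dots> = (\<Sum>v\<in>newv m. \<Sum>I\<in>?C v. f (insert v I))"
    by (rule sum.cong[OF refl]) (simp add: sum.reindex[OF inj] comp_def)
  finally show ?thesis .
qed


lemma ac_term: assumes m: "1 \<le> m" "2*m \<le> M" and v: "v \<in> newv m" and I: "I \<in> Ind (2*m-2)"
  shows "anticomm (vv v) (vp I) = (if \<forall>w\<in>I. \<not> adj v w then 2 * vp (insert v I) else 0)"
proof -
  have vM: "v \<in> verts M" using v verts_mono[OF m(2)] by (auto simp: newv_def)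
  have Isub: "I \<subseteq> verts (2*m-2)" using I Ind_sub by auto
  have "verts (2*m-2) \<subseteq> verts M" using m by (intro verts_mono) linarith
  then have IM: "I \<subseteq> verts M" using Isub by auto
  have fI: "finite I" using Ind_finite[OF I] .
  have vI: "v \<notin> I" using Isub newv_notin[OF v] by auto
  have Iind: "\<forall>x\<in>I. \<forall>y\<in>I. \<not> adj x y" using I by (auto simp: Ind_def indep_set_def)
  have r: "rel (vv v) (vp I) (prod (sg v) I)"
    by (rule vp_rel[OF fI]) (use vrel vM IM in auto)
  show ?thesis
  proof (cases "\<forall>w\<in>I. \<not> adj v w")
    case True
    then have "prod (sg v) I = 1" by (simp add: sg_def)
    then have c: "vv v * vp I = vp I * vv v" using r by (simp add: rel_def)
    have "vp (insert v I) = vv v * vp I"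
    proof (rule vp_insert[OF fI vI])
      fix w assume "w \<in> I"
      then have "rel (vv v) (vv w) (sg v w)" using vrel vM IM by auto
      then show "vv v * vv w = vv w * vv v" using True \<open>w \<in> I\<close> by (simp add: rel_def sg_def)
    qed
    then show ?thesis using True c by (simp add: anticomm_def mult_2)
  next
    case False
    then obtain w0 where w0: "w0 \<in> I" "adj v w0" by auto
    have others: "\<not> adj v w" if "w \<in> I - {w0}" for w
    proof
      assume "adj v w"
      then have "adj w0 w" using old_adj[OF m(1) v] w0 that Isub by auto
      then show False using Iind w0 that by auto
    qed
    have "prod (sg v) I = sg v w0 * prod (sg v) (I - {w0})" using prod.remove[OF fI w0(1)] .
    also have "prod (sg v) (I - {w0}) = 1" using others by (simp add: sg_def)
    finally have "prod (sg v) I = -1" using w0 by (simp add: sg_def)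
    then have "vv v * vp I = - (vp I * vv v)" using r by (simp add: rel_def)
    then have ac0: "anticomm (vv v) (vp I) = 0" by (simp add: anticomm_def)
    show ?thesis by (subst if_not_P[OF False]) (rule ac0)
  qed
qed

lemma S_sum: assumes "1 \<le> m" "2*m \<le> M"
  shows "zext M h (2*m-1) + zext M h (2*m) + hb m = (\<Sum>v\<in>newv m. vv v)"
proof (cases "2 \<le> m")
  case True
  then show ?thesis using assms by (simp add: newv_eq)
next
  case False
  then have "m = 1" using assms by simp
  then show ?thesis by (simp add: newv_eq hbar_def)
qed


lemma ac_emb: "anticomm X (emb c * P) = emb c * anticomm X P"
proof -
  have "X * (emb c * P) = emb c * (X * P)" by (metis emb_central mult.assoc)
  then show ?thesis by (simp add: anticomm_def distrib_left mult.assoc)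
qed

lemma main: assumes m: "1 \<le> m" "2*m \<le> M"
  shows "transfer M b h emb beta3 beta5 (2*m) u =
           transfer M b h emb beta3 beta5 (2*m - 2) u
           - emb (u / 2) * anticomm (zext M h (2*m - 1) + zext M h (2*m) + hb m)
                                    (transfer M b h emb beta3 beta5 (2*m - 2) u)"
proof -
  define f where "f S = emb ((-u)^card S) * vp S" for S
  define C where "C v = {I \<in> Ind (2*m-2). \<forall>w\<in>I. \<not> adj v w}" for v
  have L: "transfer M b h emb beta3 beta5 (2*m) u = (\<Sum>S\<in>Ind (2*m-2). f S) + (\<Sum>v\<in>newv m. \<Sum>I\<in>C v. f (insert v I))"
    unfolding T_expand f_def C_def by (rule sum_decomp[OF m(1)])
  have T': "transfer M b h emb beta3 beta5 (2*m-2) u = (\<Sum>I\<in>Ind (2*m-2). f I)"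
    unfolding T_expand f_def ..
  have key: "emb (u/2) * (emb ((-u)^card I) * anticomm (vv v) (vp I)) = - (if I \<in> C v then f (insert v I) else 0)"
    if v: "v \<in> newv m" and I: "I \<in> Ind (2*m-2)" for v I
  proof (cases "I \<in> C v")
    case True
    then have nadj: "\<forall>w\<in>I. \<not> adj v w" by (simp add: C_def)
    have vI: "v \<notin> I" using I Ind_sub newv_notin[OF v] by auto
    have cI: "card (insert v I) = Suc (card I)" using vI Ind_finite[OF I] by simp
    have "emb (u/2) * (emb ((-u)^card I) * anticomm (vv v) (vp I))
        = emb (u/2) * (emb ((-u)^card I) * (emb 2 * vp (insert v I)))"
      using ac_term[OF m v I] nadj by (simp add: emb_2)
    also have "\<dots> = emb (u/2 * (-u)^card I * 2) * vp (insert v I)"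
      by (simp only: emb_mult mult.assoc)
    also have "u/2 * (-u)^card I * 2 = - ((-u)^card (insert v I))" using cI by simp
    finally show ?thesis using True by (simp add: f_def emb_neg)
  next
    case False
    then have nP: "\<not> (\<forall>w\<in>I. \<not> adj v w)" using I by (simp add: C_def)
    have "anticomm (vv v) (vp I) = 0" unfolding ac_term[OF m v I] by (rule if_not_P[OF nP])
    then show ?thesis using False by simp
  qed
  have R: "emb (u/2) * anticomm (\<Sum>v\<in>newv m. vv v) (\<Sum>I\<in>Ind (2*m-2). f I)
     = - (\<Sum>v\<in>newv m. \<Sum>I\<in>C v. f (insert v I))"
  proof -
    have "emb (u/2) * anticomm (\<Sum>v\<in>newv m. vv v) (\<Sum>I\<in>Ind (2*m-2). f I)
       = (\<Sum>v\<in>newv m. \<Sum>I\<in>Ind (2*m-2). emb (u/2) * (emb ((-u)^card I) * anticomm (vv v) (vp I)))"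
      by (simp add: anticomm_sum_left anticomm_sum_right sum_distrib_left f_def ac_emb) (rule sum.swap)
    also have "\<dots> = (\<Sum>v\<in>newv m. \<Sum>I\<in>Ind (2*m-2). - (if I \<in> C v then f (insert v I) else 0))"
      by (intro sum.cong refl key)
    also have "\<dots> = - (\<Sum>v\<in>newv m. \<Sum>I\<in>C v. f (insert v I))"
    proof -
      have "(\<Sum>I\<in>Ind (2*m-2). (if I \<in> C v then f (insert v I) else 0)) = (\<Sum>I\<in>C v. f (insert v I))" for v
        unfolding C_def by (simp add: sum.inter_filter[OF finite_Ind])
      then show ?thesis by (simp add: sum_negf)
    qed
    finally show ?thesis .
  qed
  show ?thesis unfolding L T' S_sum[OF m] R by simp
qed

end

theorem mainTheorem4:
  fixes M :: nat and b :: "nat \<Rightarrow> complex" and h :: "nat \<Rightarrow> 'a::ring_1"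
    and emb :: "complex \<Rightarrow> 'a" and beta3 beta5 :: complex
  assumes alg: "is_complex_algebra emb"
    and M1: "1 \<le> M"
    and sq: "\<And>i. 1 \<le> i \<Longrightarrow> i \<le> M \<Longrightarrow> h i * h i = emb ((b i)\<^sup>2)"
    and ac1: "\<And>i. 1 \<le> i \<Longrightarrow> i + 1 \<le> M \<Longrightarrow> h i * h (i + 1) = - (h (i + 1) * h i)"
    and ac2: "\<And>i. 1 \<le> i \<Longrightarrow> i + 2 \<le> M \<Longrightarrow> h i * h (i + 2) = - (h (i + 2) * h i)"
    and cm: "\<And>i l. 1 \<le> i \<Longrightarrow> i \<le> M \<Longrightarrow> 1 \<le> l \<Longrightarrow> l \<le> M \<Longrightarrow> i + 2 < l \<Longrightarrow> h i * h l = h l * h i"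
    and den: "\<And>k. 3 \<le> k \<Longrightarrow> 2 * k + 1 \<le> M \<Longrightarrow>
               (zext M b (2*k - 4))\<^sup>2 * betaseq M b beta3 beta5 (k - 2)
                 - (zext M b (2*k))\<^sup>2 * betaseq M b beta3 beta5 (k - 1) + 1 \<noteq> 0"
    and m: "1 \<le> m" "2 * m \<le> M"
  shows "transfer M b h emb beta3 beta5 (2*m) u =
           transfer M b h emb beta3 beta5 (2*m - 2) u
           - emb (u / 2) * anticomm (zext M h (2*m - 1) + zext M h (2*m) + hbar M b h emb beta3 beta5 m)
                                    (transfer M b h emb beta3 beta5 (2*m - 2) u)"
  proof -
  interpret model M b h emb beta3 beta5
    by (unfold_locales) (use alg ac1 ac2 cm in auto)
  show ?thesis by (rule main[OF m])
qed

end
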